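(* Let $\mathbb{P}$ and $F_b$ be as in the context. For any $\varepsilon>0$ there exist $\delta=\delta(\varepsilon)>0$, independent of $\Lambda$, and an event $B_\varepsilon$ (in the variables $(J,\vec E)$) with $\mathbb{P}(B_\varepsilon)>1-\varepsilon$ such that on $B_\varepsilon$, $$\#\{b\in\Lambda^*:|F_b(J_\Lambda)|>\delta\}>(1-\varepsilon)|\Lambda^*|.$$
   Context: $\Lambda\subset\mathbb{Z}^d$ is a finite cube centred at the origin; $\Lambda^*$ its set of nearest-neighbour edges. Couplings $J=(J_e)$ on all nearest-neighbour edges of $\mathbb{Z}^d$ are i.i.d. standard Gaussian with law $\nu$; $J'$ an independent copy; $J_\Lambda=(J_e)_{e\in\Lambda^*}$, $J_{\Lambda^c}$ the rest. For spins $\eta$ and $e=\{x,y\}$, $\eta_e=\eta_x\eta_y$; $\mathcal S_\Lambda$ is the set of edge configurations on $\Lambda^*$ induced by spin configurations. $H_{\Lambda,J}(\eta)=-\sum_{e\in\Lambda^*}J_e\eta_e$. Metastate representation: for $B_n=[-n,n]^d\supset\Lambda$ and a fixed coupling-independent boundary condition, let $E_n(\eta,\eta')$ be the difference of the energies, from edges outside $\Lambda^*$, of the minimizers of the $B_n$ Hamiltonian constrained to equal $\eta$, resp. $\eta'$, on $\Lambda$. Along a subsequence the law of $(J,\vec E_n)$ converges weakly to that of some $(J,\vec E)$ with $E(\eta,\eta)=0$, $E(\eta,\eta'')=E(\eta,\eta')+E(\eta',\eta'')$ and $(J_{\Lambda^c},\vec E)$ independent of $J_\Lambda$; $\vec E$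 is regarded as indexed by $\mathcal S_\Lambda$; $\kappa_{J_{\Lambda^c}}(d\vec E)$ is the conditional law of $\vec E$ given $J$. Set $d\mathbb{P}=d\nu(J)\,d\nu(J')\,d\kappa_{J_{\Lambda^c}}(\vec E)$. Given $\vec E$, the critical set is $\mathcal C=\bigcup_{\eta\ne\eta'}\{J_\Lambda:\sum_eJ_e(\eta_e-\eta'_e)=E(\eta,\eta')\}$; for $J_\Lambda\notin\mathcal C$, $\eta\prec\eta'$ iff $E(\eta,\eta')+H_{\Lambda,J}(\eta)-H_{\Lambda,J}(\eta')<0$ (a strict total order), and $\sigma^{\pm,b}(J_\Lambda)$ is the $\prec$-minimal element among $\eta$ with $\eta_b=\pm1$. The flexibility of the edge $b$ is $F_b(J_\Lambda)=\big|-\sum_{e\in\Lambda^*}J_e(\sigma^{+,b}_e(J_\Lambda)-\sigma^{-,b}_e(J_\Lambda))+E(\sigma^{+,b}(J_\Lambda),\sigma^{-,b}(J_\Lambda))\big|$, extended continuously to all of $\mathbb{R}^{\Lambda^*}$. *)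

theory Defs
  imports "HOL-Probability.Probability"
begin

text \<open>Sites of Z^d are vectors int^'d (dimension d = CARD('d), fixed).
  An edge is the two-element set {x,y} of nearest neighbours.\<close>

type_synonym 'd vertex = "int ^ 'd"
type_synonym 'd edge = "'d vertex set"
type_synonym 'd edge_cfg = "'d edge \<Rightarrow> real"

definition nn :: "'d::finite vertex \<Rightarrow> 'd vertex \<Rightarrow> bool" where
  "nn x y \<longleftrightarrow> (\<Sum>i\<in>UNIV. \<bar>x $ i - y $ i\<bar>) = 1"

definition cube :: "int \<Rightarrow> 'd::finite vertex set" where
  "cube L = {x. \<forall>i. \<bar>x $ i\<bar> \<le> L}"

definition edges_in :: "'d::finite vertex set \<Rightarrow> 'd edge set" where
  "edges_in A = {{x, y} | x y. x \<in> A \<and> y \<in> A \<and> nn x y}"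

definition all_edges :: "'d::finite edge set" where
  "all_edges = edges_in UNIV"

definition LStar :: "int \<Rightarrow> 'd::finite edge set" where
  "LStar L = edges_in (cube L)"

definition edge_config :: "int \<Rightarrow> ('d::finite vertex \<Rightarrow> real) \<Rightarrow> 'd edge_cfg" where
  "edge_config L \<eta> = (\<lambda>e. if e \<in> LStar L then (\<Prod>x\<in>e. \<eta> x) else 0)"

definition SL :: "int \<Rightarrow> 'd::finite edge_cfg set" where
  "SL L = {edge_config L \<eta> | \<eta>. \<forall>x\<in>cube L. \<eta> x \<in> {-1, 1}}"

definition Ham :: "int \<Rightarrow> ('d::finite edge \<Rightarrow> real) \<Rightarrow> 'd edge_cfg \<Rightarrow> real" where
  "Ham L J \<eta> = - (\<Sum>e\<in>LStar L. J e * \<eta> e)"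

type_synonym 'd evec = "('d edge_cfg \<times> 'd edge_cfg) \<Rightarrow> real"

definition critical :: "int \<Rightarrow> 'd::finite evec \<Rightarrow> ('d edge \<Rightarrow> real) set" where
  "critical L E = {J. \<exists>\<eta>\<in>SL L. \<exists>\<eta>'\<in>SL L. \<eta> \<noteq> \<eta>' \<and>
      (\<Sum>e\<in>LStar L. J e * (\<eta> e - \<eta>' e)) = E (\<eta>, \<eta>')}"

definition prec :: "int \<Rightarrow> 'd::finite evec \<Rightarrow> ('d edge \<Rightarrow> real) \<Rightarrow> 'd edge_cfg \<Rightarrow> 'd edge_cfg \<Rightarrow> bool" where
  "prec L E J \<eta> \<eta>' \<longleftrightarrow> E (\<eta>, \<eta>') + Ham L J \<eta> - Ham L J \<eta>' < 0"

definition sigma :: "int \<Rightarrow> 'd::finite evec \<Rightarrow> ('d edge \<Rightarrow> real) \<Rightarrow> 'd edge \<Rightarrow> real \<Rightarrow> 'd edge_cfg" where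
  "sigma L E J b s = (THE \<eta>. \<eta> \<in> SL L \<and> \<eta> b = s \<and>
      (\<forall>\<eta>'\<in>SL L. \<eta>' b = s \<longrightarrow> \<eta>' \<noteq> \<eta> \<longrightarrow> prec L E J \<eta> \<eta>'))"

text \<open>The defining formula of the flexibility (meaningful off the critical set).\<close>
definition flex_raw :: "int \<Rightarrow> 'd::finite evec \<Rightarrow> 'd edge \<Rightarrow> ('d edge \<Rightarrow> real) \<Rightarrow> real" where
  "flex_raw L E b J =
     \<bar>- (\<Sum>e\<in>LStar L. J e * (sigma L E J b 1 e - sigma L E J b (-1) e))
      + E (sigma L E J b 1, sigma L E J b (-1))\<bar>"

definition flexibility :: "int \<Rightarrow> 'd::finite evec \<Rightarrow> 'd edge \<Rightarrow> ('d edge \<Rightarrow> real) \<Rightarrow> real" where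
  "flexibility L E b J =
     (if J \<notin> critical L E then flex_raw L E b J
      else Lim (at J within - critical L E) (flex_raw L E b))"

definition nu :: "('d::finite edge \<Rightarrow> real) measure" where
  "nu = (\<Pi>\<^sub>M e\<in>all_edges. density lborel std_normal_density)"

definition Espace :: "int \<Rightarrow> 'd::finite evec measure" where
  "Espace L = (\<Pi>\<^sub>M p\<in>SL L \<times> SL L. borel)"

definition Ecocycle :: "int \<Rightarrow> 'd::finite evec \<Rightarrow> bool" where
  "Ecocycle L E \<longleftrightarrow> (\<forall>\<eta>\<in>SL L. E (\<eta>, \<eta>) = 0) \<and>
     (\<forall>\<eta>\<in>SL L. \<forall>\<eta>'\<in>SL L. \<forall>\<eta>''\<in>SL L. E (\<eta>, \<eta>'') = E (\<eta>, \<eta>') + E (\<eta>', \<eta>''))"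

definition metastate_kernel :: "int \<Rightarrow> (('d::finite edge \<Rightarrow> real) \<Rightarrow> 'd evec measure) \<Rightarrow> bool" where
  "metastate_kernel L \<kappa> \<longleftrightarrow>
     \<kappa> \<in> measurable (\<Pi>\<^sub>M e\<in>all_edges - LStar L. borel) (prob_algebra (Espace L)) \<and>
     (\<forall>j\<in>space (\<Pi>\<^sub>M e\<in>all_edges - LStar L. (borel::real measure)).
        AE E in \<kappa> j. Ecocycle L E)"

definition metaP :: "int \<Rightarrow> (('d::finite edge \<Rightarrow> real) \<Rightarrow> 'd evec measure)
     \<Rightarrow> (('d edge \<Rightarrow> real) \<times> 'd evec) measure" where
  "metaP L \<kappa> = nu \<bind> (\<lambda>J. distr (\<kappa> (restrict J (all_edges - LStar L)))
                                   (nu \<Otimes>\<^sub>M Espace L) (\<lambda>E. (J, E)))"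

end

theory Submission
  imports Defs
begin


lemma finite_cube: "finite (cube L :: 'd::finite vertex set)"
proof -
  have "cube L \<subseteq> (\<lambda>f. \<chi> i. f i) ` (PiE UNIV (\<lambda>_::'d. {-L..L}))"
  proof
    fix x :: "'d vertex" assume "x \<in> cube L"
    hence h: "\<And>i. \<bar>x $ i\<bar> \<le> L" by (auto simp: cube_def)
    have "\<And>i. x $ i \<in> {-L..L}" using h by (simp add: abs_le_iff) (smt (verit) h)
    hence "(\<lambda>i. x $ i) \<in> PiE UNIV (\<lambda>_. {-L..L})" by auto
    thus "x \<in> (\<lambda>f. \<chi> i. f i) ` (PiE UNIV (\<lambda>_::'d. {-L..L}))"
      by (intro image_eqI[where x="\<lambda>i. x $ i"]) auto
  qed
  moreover have "finite ((\<lambda>f. \<chi> i. f i) ` (PiE UNIV (\<lambda>_::'d. {-L..L})))"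
    by (intro finite_imageI finite_PiE) auto
  ultimately show ?thesis by (rule finite_subset)
qed

lemma finite_LStar: "finite (LStar L :: 'd::finite edge set)"
proof -
  have "LStar L \<subseteq> Pow (cube L :: 'd vertex set)"
    by (auto simp: LStar_def edges_in_def)
  thus ?thesis using finite_cube by (meson finite_Pow_iff finite_subset)
qed

lemma LStar_sub: "LStar L \<subseteq> all_edges"
  by (auto simp: LStar_def all_edges_def edges_in_def)

lemma nn_neq: "nn x y \<Longrightarrow> x \<noteq> y"
  by (auto simp: nn_def)

lemma prod_pm1: "finite A \<Longrightarrow> (\<forall>x\<in>A. f x \<in> {-1,1::real}) \<Longrightarrow> prod f A \<in> {-1,1}"
  by (induction A rule: finite_induct) auto

lemma SL_val: assumes "\<eta> \<in> SL L" shows "e \<in> LStar L \<Longrightarrow> \<eta> e \<in> {-1,1}" "e \<notin> LStar L \<Longrightarrow> \<eta> e = 0"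
proof -
  obtain s where s: "\<eta> = edge_config L s" "\<forall>x\<in>cube L. s x \<in> {-1,1}" using assms by (auto simp: SL_def)
  show "e \<notin> LStar L \<Longrightarrow> \<eta> e = 0" using s by (auto simp: edge_config_def)
  assume e: "e \<in> LStar L"
  then obtain x y where "e = {x,y}" "x \<in> cube L" "y \<in> cube L" by (auto simp: LStar_def edges_in_def)
  hence "prod s e \<in> {-1,1}" using s by (intro prod_pm1) auto
  thus "\<eta> e \<in> {-1,1}" using s e by (auto simp: edge_config_def)
qed

lemma finite_SL: "finite (SL L :: 'd::finite edge_cfg set)"
proof -
  have "SL L \<subseteq> {f. \<forall>x. (x \<in> LStar L \<longrightarrow> f x \<in> {-1,1}) \<and> (x \<notin> LStar L \<longrightarrow> f x = 0)}"
    using SL_val by blast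
  moreover have "finite {f. \<forall>x. (x \<in> LStar L \<longrightarrow> f x \<in> {-1,1}) \<and> (x \<notin> LStar L \<longrightarrow> f x = (0::real))}"
    by (intro finite_set_of_finite_funs finite_LStar) auto
  ultimately show ?thesis by (rule finite_subset)
qed

definition eta0 :: "int \<Rightarrow> 'd::finite edge_cfg" where "eta0 L = edge_config L (\<lambda>_. 1)"

lemma eta0_SL: "eta0 L \<in> SL L"
  by (auto simp: eta0_def SL_def)

lemma SL_exists:
  assumes b: "b \<in> LStar L" and s: "s \<in> {-1,1::real}"
  shows "\<exists>\<eta>\<in>SL L. \<eta> b = s"
proof -
  obtain x y where xy: "b = {x,y}" "x \<in> cube L" "y \<in> cube L" "nn x y" using b by (auto simp: LStar_def edges_in_def)
  have "x \<noteq> y" using xy nn_neq by auto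
  define \<sigma> where "\<sigma> = (\<lambda>z. if z = x then s else 1)"
  have "\<forall>z\<in>cube L. \<sigma> z \<in> {-1,1}" using s by (auto simp: \<sigma>_def)
  hence "edge_config L \<sigma> \<in> SL L" unfolding SL_def by blast
  moreover have "edge_config L \<sigma> b = s" using b xy \<open>x \<noteq> y\<close> by (auto simp: edge_config_def \<sigma>_def)
  ultimately show ?thesis by blast
qed

lemma LStar_nonempty: "L \<ge> 1 \<Longrightarrow> LStar L \<noteq> ({} :: 'd::finite edge set)"
proof -
  assume L: "L \<ge> 1"
  obtain i0 :: 'd where True by blast
  define y :: "'d vertex" where "y = (\<chi> i. if i = i0 then 1 else 0)"
  have "nn 0 y" unfolding nn_def y_def by (simp add: if_distrib[of abs] cong: if_cong)
  moreover have "0 \<in> cube L" "y \<in> cube L" using L by (auto simp: cube_def y_def)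
  ultimately have "{0,y} \<in> LStar L" by (auto simp: LStar_def edges_in_def)
  thus ?thesis by auto
qed


definition Wt :: "int \<Rightarrow> ('d::finite edge \<Rightarrow> real) \<Rightarrow> 'd evec \<Rightarrow> 'd edge_cfg \<Rightarrow> real" where
  "Wt L J E \<eta> = Ham L J \<eta> - E (eta0 L, \<eta>)"

definition Wr :: "int \<Rightarrow> 'd::finite edge \<Rightarrow> ('d edge \<Rightarrow> real) \<Rightarrow> 'd evec \<Rightarrow> 'd edge_cfg \<Rightarrow> real" where
  "Wr L b J E \<eta> = - (\<Sum>e\<in>LStar L - {b}. J e * \<eta> e) - E (eta0 L, \<eta>)"

definition aa :: "int \<Rightarrow> 'd::finite edge \<Rightarrow> real \<Rightarrow> ('d edge \<Rightarrow> real) \<Rightarrow> 'd evec \<Rightarrow> real" where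
  "aa L b s J E = Min ((\<lambda>\<eta>. Wr L b J E \<eta>) ` {\<eta>\<in>SL L. \<eta> b = s})"

definition gb :: "int \<Rightarrow> 'd::finite edge \<Rightarrow> ('d edge \<Rightarrow> real) \<Rightarrow> 'd evec \<Rightarrow> real" where
  "gb L b J E = (aa L b 1 J E - aa L b (-1) J E) / 2"

lemma E_pot: "Ecocycle L E \<Longrightarrow> \<eta> \<in> SL L \<Longrightarrow> \<eta>' \<in> SL L \<Longrightarrow> E (\<eta>, \<eta>') = E (eta0 L, \<eta>') - E (eta0 L, \<eta>)"
  using eta0_SL[of L] unfolding Ecocycle_def by (metis add_diff_cancel_left')

lemma prec_iff: "Ecocycle L E \<Longrightarrow> \<eta> \<in> SL L \<Longrightarrow> \<eta>' \<in> SL L \<Longrightarrow>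
   prec L E J \<eta> \<eta>' \<longleftrightarrow> Wt L J E \<eta> < Wt L J E \<eta>'"
  using E_pot[of L E \<eta> \<eta>'] unfolding prec_def Wt_def by auto

lemma sum_diff_Ham: "(\<Sum>e\<in>LStar L. J e * (\<eta> e - \<eta>' e)) = Ham L J \<eta>' - Ham L J \<eta>"
  unfolding Ham_def by (simp add: right_diff_distrib sum_subtractf)

lemma W_inj:
  assumes coc: "Ecocycle L E"
    and nc: "\<forall>\<eta>\<in>SL L. \<forall>\<eta>'\<in>SL L. \<eta> \<noteq> \<eta>' \<longrightarrow> (\<Sum>e\<in>LStar L. J e * (\<eta> e - \<eta>' e)) \<noteq> E (\<eta>, \<eta>')"
    and h: "\<eta> \<in> SL L" "\<eta>' \<in> SL L" "Wt L J E \<eta> = Wt L J E \<eta>'"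
  shows "\<eta> = \<eta>'"
proof (rule ccontr)
  assume "\<eta> \<noteq> \<eta>'"
  hence "(\<Sum>e\<in>LStar L. J e * (\<eta> e - \<eta>' e)) \<noteq> E (\<eta>, \<eta>')" using nc h by auto
  moreover have "(\<Sum>e\<in>LStar L. J e * (\<eta> e - \<eta>' e)) = E (\<eta>, \<eta>')"
    using h E_pot[OF coc h(1,2)] unfolding sum_diff_Ham Wt_def by auto
  ultimately show False by blast
qed

lemma W_split: "b \<in> LStar L \<Longrightarrow> Wt L J E \<eta> = - J b * \<eta> b + Wr L b J E \<eta>"
  unfolding Wt_def Wr_def Ham_def
  by (simp add: sum.remove[OF finite_LStar, of b])

lemma sigma_char:
  assumes coc: "Ecocycle L E"
    and nc: "\<forall>\<eta>\<in>SL L. \<forall>\<eta>'\<in>SL L. \<eta> \<noteq> \<eta>' \<longrightarrow> (\<Sum>e\<in>LStar L. J e * (\<eta> e - \<eta>' e)) \<noteq> E (\<eta>, \<eta>')"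
    and b: "b \<in> LStar L" and s: "s \<in> {-1,1}"
  shows "sigma L E J b s \<in> SL L \<and> sigma L E J b s b = s \<and>
         Wt L J E (sigma L E J b s) = Min (Wt L J E ` {\<eta>\<in>SL L. \<eta> b = s})"
proof -
  let ?A = "{\<eta>\<in>SL L. \<eta> b = s}"
  have fin: "finite ?A" by (rule finite_subset[OF _ finite_SL[of L]]) auto
  have ne: "?A \<noteq> {}" using SL_exists[OF b s] by auto
  obtain m where m: "m \<in> ?A" "Wt L J E m = Min (Wt L J E ` ?A)"
    using Min_in[of "Wt L J E ` ?A"] fin ne by (metis (no_types, lifting) empty_is_image finite_imageI imageE)
  have P: "m \<in> SL L \<and> m b = s \<and> (\<forall>\<eta>'\<in>SL L. \<eta>' b = s \<longrightarrow> \<eta>' \<noteq> m \<longrightarrow> prec L E J m \<eta>')"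
  proof (intro conjI ballI impI)
    fix \<eta>' assume h: "\<eta>' \<in> SL L" "\<eta>' b = s" "\<eta>' \<noteq> m"
    have "Wt L J E m \<le> Wt L J E \<eta>'" using m h fin by auto
    moreover have "Wt L J E m \<noteq> Wt L J E \<eta>'" using W_inj[OF coc nc, of m \<eta>'] m h by auto
    ultimately show "prec L E J m \<eta>'" using prec_iff[OF coc, of m \<eta>'] m h by auto
  qed (use m in auto)
  have "sigma L E J b s = m"
    unfolding sigma_def
  proof (rule the_equality)
    fix \<eta> assume h: "\<eta> \<in> SL L \<and> \<eta> b = s \<and> (\<forall>\<eta>'\<in>SL L. \<eta>' b = s \<longrightarrow> \<eta>' \<noteq> \<eta> \<longrightarrow> prec L E J \<eta> \<eta>')"
    show "\<eta> = m"
    proof (rule ccontr)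
      assume "\<eta> \<noteq> m"
      hence "prec L E J \<eta> m" using h m by auto
      hence "Wt L J E \<eta> < Wt L J E m" using prec_iff[OF coc, of \<eta> m] h m by auto
      moreover have "Wt L J E m \<le> Wt L J E \<eta>" using m h fin by auto
      ultimately show False by auto
    qed
  qed (rule P)
  thus ?thesis using m by auto
qed

lemma Min_shift:
  assumes b: "b \<in> LStar L" and s: "s \<in> {-1,1}"
  shows "Min (Wt L J E ` {\<eta>\<in>SL L. \<eta> b = s}) = - J b * s + aa L b s J E"
proof -
  let ?A = "{\<eta>\<in>SL L. \<eta> b = s}"
  have fin: "finite ?A" by (rule finite_subset[OF _ finite_SL[of L]]) auto
  have ne: "?A \<noteq> {}" using SL_exists[OF b s] by auto
  have "Wt L J E ` ?A = (\<lambda>t. - J b * s + t) ` (Wr L b J E ` ?A)"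
    using W_split[OF b] by (auto simp: image_image intro!: image_cong)
  also have "Min \<dots> = - J b * s + Min (Wr L b J E ` ?A)"
    by (rule mono_Min_commute[symmetric]) (use fin ne in \<open>auto simp: mono_def\<close>)
  finally show ?thesis by (simp add: aa_def)
qed

lemma det_flex:
  assumes coc: "Ecocycle L E"
    and nc: "\<forall>\<eta>\<in>SL L. \<forall>\<eta>'\<in>SL L. \<eta> \<noteq> \<eta>' \<longrightarrow> (\<Sum>e\<in>LStar L. J e * (\<eta> e - \<eta>' e)) \<noteq> E (\<eta>, \<eta>')"
    and b: "b \<in> LStar L" and gap: "\<bar>J b - gb L b J E\<bar> > \<delta> / 2"
  shows "\<bar>flexibility L E b J\<bar> > \<delta>"
proof -
  have ncr: "J \<notin> critical L E" using nc by (auto simp: critical_def)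
  let ?p = "sigma L E J b 1" and ?m = "sigma L E J b (-1)"
  have p: "?p \<in> SL L" "Wt L J E ?p = - J b + aa L b 1 J E"
    using sigma_char[OF coc nc b, of 1] Min_shift[OF b, of 1] by auto
  have m: "?m \<in> SL L" "Wt L J E ?m = J b + aa L b (-1) J E"
    using sigma_char[OF coc nc b, of "-1"] Min_shift[OF b, of "-1"] by auto
  have "flexibility L E b J = flex_raw L E b J" using ncr by (simp add: flexibility_def)
  also have "\<dots> = \<bar>Wt L J E ?p - Wt L J E ?m\<bar>"
    unfolding flex_raw_def sum_diff_Ham E_pot[OF coc p(1) m(1)] Wt_def by simp
  also have "\<dots> = 2 * \<bar>J b - gb L b J E\<bar>" unfolding p m gb_def by (auto simp: abs_if field_simps)
  finally show ?thesis using gap by simp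
qed



abbreviation G :: "real measure" where "G \<equiv> density lborel std_normal_density"

lemma prob_G: "prob_space G" by (rule prob_space_normal_density) simp

lemma sets_G[measurable_cong]: "sets G = sets borel" by simp

lemma prob_nu: "prob_space (nu :: ('d::finite edge \<Rightarrow> real) measure)"
  unfolding nu_def by (intro prob_space_PiM prob_G)

lemma std_le: "std_normal_density x \<le> 1/2"
proof -
  have "exp (- x\<^sup>2 / 2) \<le> 1" by simp
  moreover have "1 / sqrt (2 * pi) \<le> 1/2"
  proof -
    have "4 \<le> 2 * pi" using pi_gt3 by linarith
    hence "sqrt 4 \<le> sqrt (2*pi)" by (rule real_sqrt_le_mono)
    hence "2 \<le> sqrt (2*pi)" by simp
    thus ?thesis by (simp add: divide_simps)
  qed
  ultimately show ?thesis unfolding std_normal_density_def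
    by (smt (verit) mult_left_le mult_nonneg_nonneg divide_nonneg_nonneg exp_gt_zero real_sqrt_ge_zero pi_ge_zero)
qed

lemma gauss_bound:
  assumes r: "r \<ge> 0"
  shows "emeasure G {x. \<bar>x - c\<bar> \<le> r} \<le> ennreal r"
proof -
  have eq: "{x. \<bar>x - c\<bar> \<le> r} = {c - r .. c + r}" by (auto simp: abs_le_iff)
  have "emeasure G {c - r .. c + r} = (\<integral>\<^sup>+x. ennreal (std_normal_density x) * indicator {c - r .. c + r} x \<partial>lborel)"
    by (subst emeasure_density) auto
  also have "\<dots> \<le> (\<integral>\<^sup>+x. ennreal (1/2) * indicator {c - r .. c + r} x \<partial>lborel)"
    using ennreal_leI[OF std_le] by (intro nn_integral_mono) (auto split: split_indicator)
  also have "\<dots> = ennreal (1/2) * emeasure lborel {c - r .. c + r}"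
    by (subst nn_integral_cmult_indicator) auto
  also have "\<dots> = ennreal (1/2) * ennreal (2 * r)" using r by simp
  also have "\<dots> = ennreal (1/2 * (2 * r))" by (rule ennreal_mult[symmetric]) (use r in auto)
  also have "\<dots> = ennreal r" by simp
  finally show ?thesis using eq by simp
qed


definition Kk :: "int \<Rightarrow> (('d::finite edge \<Rightarrow> real) \<Rightarrow> 'd evec measure) \<Rightarrow> ('d edge \<Rightarrow> real) \<Rightarrow> (('d edge \<Rightarrow> real) \<times> 'd evec) measure" where
  "Kk L \<kappa> J = distr (\<kappa> (restrict J (all_edges - LStar L))) (nu \<Otimes>\<^sub>M Espace L) (\<lambda>E. (J, E))"

lemma metaP_Kk: "metaP L \<kappa> = nu \<bind> Kk L \<kappa>"
  unfolding metaP_def Kk_def ..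

lemma restr_meas: "(\<lambda>J. restrict J (all_edges - LStar L)) \<in> (nu :: ('d::finite edge \<Rightarrow> real) measure) \<rightarrow>\<^sub>M (\<Pi>\<^sub>M e\<in>all_edges - LStar L. borel)"
  unfolding nu_def by (rule measurable_restrict_subset'; simp)

lemma comp_meas: "e \<in> all_edges \<Longrightarrow> (\<lambda>J. J e) \<in> borel_measurable (nu :: ('d::finite edge \<Rightarrow> real) measure)"
proof -
  assume e: "e \<in> all_edges"
  have "(\<lambda>J. J e) \<in> measurable (\<Pi>\<^sub>M e\<in>all_edges. G) G" by (rule measurable_component_singleton) (rule e)
  thus ?thesis unfolding nu_def measurable_cong_sets[OF refl sets_G] .
qed

lemma snd_comp: "p \<in> SL L \<times> SL L \<Longrightarrow> (\<lambda>E. E p) \<in> borel_measurable (Espace L)"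
  unfolding Espace_def by (rule measurable_component_singleton)

lemma coc_sets: "{E \<in> space (Espace L :: 'd::finite evec measure). Ecocycle L E} \<in> sets (Espace L)"
proof -
  note fin = finite_SL[of L]
  have 1: "{E \<in> space (Espace L :: 'd evec measure). \<forall>\<eta>\<in>SL L. E (\<eta>, \<eta>) = 0} \<in> sets (Espace L)"
    by (intro sets.sets_Collect_finite_All fin) (auto intro!: borel_measurable_eq snd_comp borel_measurable_const)
  have 2: "{E \<in> space (Espace L :: 'd evec measure). \<forall>\<eta>\<in>SL L. \<forall>\<eta>'\<in>SL L. \<forall>\<eta>''\<in>SL L. E (\<eta>, \<eta>'') = E (\<eta>, \<eta>') + E (\<eta>', \<eta>'')} \<in> sets (Espace L)"
    by (intro sets.sets_Collect_finite_All fin) (auto intro!: borel_measurable_eq snd_comp borel_measurable_add)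
  have "{E \<in> space (Espace L :: 'd evec measure). Ecocycle L E} = {E \<in> space (Espace L). \<forall>\<eta>\<in>SL L. E (\<eta>, \<eta>) = 0} \<inter>
     {E \<in> space (Espace L). \<forall>\<eta>\<in>SL L. \<forall>\<eta>'\<in>SL L. \<forall>\<eta>''\<in>SL L. E (\<eta>, \<eta>'') = E (\<eta>, \<eta>') + E (\<eta>', \<eta>'')}"
    unfolding Ecocycle_def by blast
  thus ?thesis using sets.Int[OF 1 2] by simp
qed

context
  fixes L :: int and \<kappa> :: "('d::finite edge \<Rightarrow> real) \<Rightarrow> 'd evec measure"
  assumes mk: "metastate_kernel L \<kappa>"
begin

lemma kappa_meas: "(\<lambda>J. \<kappa> (restrict J (all_edges - LStar L))) \<in> (nu :: ('d edge \<Rightarrow> real) measure) \<rightarrow>\<^sub>M prob_algebra (Espace L)"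
  using measurable_compose[OF restr_meas[of L] conjunct1[OF mk[unfolded metastate_kernel_def]]] by simp

lemma kappa_J:
  assumes "J \<in> space (nu :: ('d edge \<Rightarrow> real) measure)"
  shows "sets (\<kappa> (restrict J (all_edges - LStar L))) = sets (Espace L)"
        "space (\<kappa> (restrict J (all_edges - LStar L))) = space (Espace L)"
        "prob_space (\<kappa> (restrict J (all_edges - LStar L)))"
  using measurable_space[OF kappa_meas assms] unfolding space_prob_algebra by (auto dest: sets_eq_imp_space_eq)

lemma Kk_meas: "Kk L \<kappa> \<in> nu \<rightarrow>\<^sub>M prob_algebra (nu \<Otimes>\<^sub>M Espace L)"
  unfolding Kk_def
  by (rule measurable_distr_prob_space2[OF kappa_meas]) (simp add: case_prod_Pair measurable_ident)

lemma nu_in: "nu \<in> space (prob_algebra nu)"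
  using prob_nu by (auto simp: space_prob_algebra)

lemma sets_metaP: "sets (metaP L \<kappa>) = sets (nu \<Otimes>\<^sub>M Espace L)"
  unfolding metaP_Kk by (rule sets_bind'[OF nu_in Kk_meas])

lemma space_metaP: "space (metaP L \<kappa>) = space (nu \<Otimes>\<^sub>M Espace L)"
  using sets_metaP by (rule sets_eq_imp_space_eq)

lemma prob_metaP: "prob_space (metaP L \<kappa>)"
  unfolding metaP_Kk by (rule prob_space_bind'[OF nu_in Kk_meas])

lemma Kk_emeasure:
  assumes J: "J \<in> space (nu :: ('d edge \<Rightarrow> real) measure)" and X: "X \<in> sets (nu \<Otimes>\<^sub>M Espace L)"
  shows "emeasure (Kk L \<kappa> J) X = emeasure (\<kappa> (restrict J (all_edges - LStar L))) {E\<in>space (Espace L). (J, E) \<in> X}"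
proof -
  have m: "(\<lambda>E. (J, E)) \<in> \<kappa> (restrict J (all_edges - LStar L)) \<rightarrow>\<^sub>M nu \<Otimes>\<^sub>M Espace L"
    by (subst measurable_cong_sets[OF kappa_J(1)[OF J] refl]) (rule measurable_Pair1'[OF J])
  have "(\<lambda>E. (J, E)) -` X \<inter> space (\<kappa> (restrict J (all_edges - LStar L))) = {E\<in>space (Espace L). (J, E) \<in> X}"
    using kappa_J(2)[OF J] by blast
  thus ?thesis unfolding Kk_def using emeasure_distr[OF m X] by simp
qed

lemma emeasure_metaP:
  assumes X: "X \<in> sets (nu \<Otimes>\<^sub>M Espace L)"
  shows "emeasure (metaP L \<kappa>) X = (\<integral>\<^sup>+J. emeasure (\<kappa> (restrict J (all_edges - LStar L))) {E\<in>space (Espace L). (J, E) \<in> X} \<partial>nu)"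
proof -
  have "emeasure (metaP L \<kappa>) X = (\<integral>\<^sup>+J. emeasure (Kk L \<kappa> J) X \<partial>nu)"
    unfolding metaP_Kk by (rule emeasure_bind_prob_algebra[OF nu_in Kk_meas X])
  also have "\<dots> = (\<integral>\<^sup>+J. emeasure (\<kappa> (restrict J (all_edges - LStar L))) {E\<in>space (Espace L). (J, E) \<in> X} \<partial>nu)"
  proof (rule nn_integral_cong)
    fix J :: "'d edge \<Rightarrow> real" assume J: "J \<in> space nu"
    have m: "(\<lambda>E. (J, E)) \<in> \<kappa> (restrict J (all_edges - LStar L)) \<rightarrow>\<^sub>M nu \<Otimes>\<^sub>M Espace L"
      by (subst measurable_cong_sets[OF kappa_J(1)[OF J] refl]) (rule measurable_Pair1'[OF J])
    show "emeasure (Kk L \<kappa> J) X = emeasure (\<kappa> (restrict J (all_edges - LStar L))) {E\<in>space (Espace L). (J, E) \<in> X}"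
    proof -
      have "(\<lambda>E. (J, E)) -` X \<inter> space (\<kappa> (restrict J (all_edges - LStar L))) = {E\<in>space (Espace L). (J, E) \<in> X}"
        using kappa_J(2)[OF J] by blast
      thus ?thesis unfolding Kk_def using emeasure_distr[OF m X] by simp
    qed
  qed
  finally show ?thesis .
qed

lemma key:
  assumes b: "b \<in> LStar L" and r: "r \<ge> 0"
    and g: "g \<in> borel_measurable (nu \<Otimes>\<^sub>M Espace L)"
    and ind: "\<And>J E x. g (J(b:=x), E) = g (J, E)"
  shows "emeasure (metaP L \<kappa>) {z \<in> space (nu \<Otimes>\<^sub>M Espace L). \<bar>fst z b - g z\<bar> \<le> r} \<le> ennreal r"
proof -
  let ?S = "space (nu \<Otimes>\<^sub>M Espace L)"
  define X where "X = {z\<in>?S. \<bar>fst z b - g z\<bar> \<le> r}"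
  have bA: "b \<in> all_edges" using b LStar_sub by auto
  note cb[measurable] = comp_meas[OF bA]
  note g[measurable]
  have Xs: "X \<in> sets (nu \<Otimes>\<^sub>M Espace L)" unfolding X_def by measurable
  define h where "h J = emeasure (Kk L \<kappa> J) X" for J
  have hm: "h \<in> borel_measurable nu" unfolding h_def
    using measurable_compose[OF measurable_prob_algebraD[OF Kk_meas] measurable_emeasure_subprob_algebra[OF Xs]] .
  have "emeasure (metaP L \<kappa>) X = (\<integral>\<^sup>+J. h J \<partial>nu)"
    unfolding metaP_Kk h_def by (rule emeasure_bind_prob_algebra[OF nu_in Kk_meas Xs])
  define R where "R = (\<Pi>\<^sub>M e\<in>all_edges - {b}. G)"
  have probR: "prob_space R" unfolding R_def by (intro prob_space_PiM prob_G)
  have dec: "distr (G \<Otimes>\<^sub>M R) nu (\<lambda>(x, Y). Y(b := x)) = nu"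
    using distr_pair_PiM_eq_PiM[of "all_edges - {b}" "\<lambda>_. G" b] prob_G insert_Diff[OF bA]
    unfolding R_def nu_def by simp
  have phim0: "(\<lambda>z. (snd z)(b := fst z)) \<in> G \<Otimes>\<^sub>M R \<rightarrow>\<^sub>M nu"
    unfolding nu_def R_def by (rule measurable_fun_upd[where J="all_edges - {b}"]) (use bA in auto)
  have phim: "(\<lambda>(x, Y). Y(b := x)) \<in> G \<Otimes>\<^sub>M R \<rightarrow>\<^sub>M nu"
    using phim0 by (simp add: split_beta')
  have psf: "pair_sigma_finite G R"
    by (intro pair_sigma_finite.intro prob_space_imp_sigma_finite prob_G probR)
  have "(\<integral>\<^sup>+J. h J \<partial>nu) = (\<integral>\<^sup>+z. h ((\<lambda>(x, Y). Y(b := x)) z) \<partial>(G \<Otimes>\<^sub>M R))"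
    using nn_integral_distr[OF phim, unfolded dec, OF hm] .
  also have "\<dots> = (\<integral>\<^sup>+Y. (\<integral>\<^sup>+x. h (Y(b := x)) \<partial>G) \<partial>R)"
    using pair_sigma_finite.nn_integral_snd[OF psf measurable_compose[OF phim hm]] by simp
  also have "\<dots> \<le> (\<integral>\<^sup>+Y. ennreal r \<partial>R)"
  proof (rule nn_integral_mono)
    fix Y assume Y: "Y \<in> space R"
    have Ysp: "Y(b:=x) \<in> space nu" for x
    proof -
      have "Y(b:=x) \<in> PiE (insert b (all_edges - {b})) (\<lambda>_. space G)"
        using Y unfolding R_def space_PiM by (intro PiE_fun_upd) auto
      thus ?thesis unfolding nu_def space_PiM using insert_Diff[OF bA] by simp
    qed
    have restr: "restrict (Y(b:=x)) (all_edges - LStar L) = restrict Y (all_edges - LStar L)" for x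
      using b by (auto simp: restrict_def fun_eq_iff)
    define \<kappa>0 where "\<kappa>0 = \<kappa> (restrict Y (all_edges - LStar L))"
    have k0: "sets \<kappa>0 = sets (Espace L)" "space \<kappa>0 = space (Espace L)" "prob_space \<kappa>0"
      using kappa_J[OF Ysp[of 0]] unfolding restr \<kappa>0_def by auto
    define c where "c E = g (Y(b:=0), E)" for E
    have cm[measurable]: "c \<in> borel_measurable (Espace L)"
      unfolding c_def by (rule measurable_compose[OF measurable_Pair1'[OF Ysp[of 0]] g])
    have gc: "g (Y(b:=x), E) = c E" for x E
      unfolding c_def by (metis ind fun_upd_upd)
    have hx: "h (Y(b:=x)) = emeasure \<kappa>0 {E \<in> space (Espace L). \<bar>x - c E\<bar> \<le> r}" for x
    proof -
      have "h (Y(b:=x)) = emeasure \<kappa>0 {E\<in>space (Espace L). (Y(b:=x), E) \<in> X}"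
        unfolding h_def Kk_emeasure[OF Ysp Xs] restr \<kappa>0_def ..
      also have "{E\<in>space (Espace L). (Y(b:=x), E) \<in> X} = {E \<in> space (Espace L). \<bar>x - c E\<bar> \<le> r}"
        using Ysp[of x] unfolding X_def by (auto simp: space_pair_measure gc)
      finally show ?thesis .
    qed
    define A0 where "A0 = {z \<in> space (G \<Otimes>\<^sub>M Espace L). \<bar>fst z - c (snd z)\<bar> \<le> r}"
    have A0s: "A0 \<in> sets (G \<Otimes>\<^sub>M Espace L)" unfolding A0_def by measurable
    have sG: "sets (G \<Otimes>\<^sub>M \<kappa>0) = sets (G \<Otimes>\<^sub>M Espace L)"
      by (rule sets_pair_measure_cong) (auto simp: k0)
    have Fm: "indicator A0 \<in> borel_measurable (G \<Otimes>\<^sub>M \<kappa>0)"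
      using A0s unfolding measurable_cong_sets[OF sG refl] by simp
    have psf0: "pair_sigma_finite G \<kappa>0"
      by (intro pair_sigma_finite.intro prob_space_imp_sigma_finite prob_G k0(3))
    have "(\<integral>\<^sup>+x. h (Y(b := x)) \<partial>G) = (\<integral>\<^sup>+x. (\<integral>\<^sup>+E. indicator A0 (x, E) \<partial>\<kappa>0) \<partial>G)"
    proof (rule nn_integral_cong)
      fix x :: real
      have ms: "{E \<in> space (Espace L). \<bar>x - c E\<bar> \<le> r} \<in> sets \<kappa>0" unfolding k0 by measurable
      have "h (Y(b := x)) = (\<integral>\<^sup>+E. indicator {E \<in> space (Espace L). \<bar>x - c E\<bar> \<le> r} E \<partial>\<kappa>0)"
        unfolding hx by (rule nn_integral_indicator[OF ms, symmetric])
      also have "\<dots> = (\<integral>\<^sup>+E. indicator A0 (x, E) \<partial>\<kappa>0)"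
        by (rule nn_integral_cong) (auto simp: A0_def space_pair_measure k0 split: split_indicator)
      finally show "h (Y(b := x)) = (\<integral>\<^sup>+E. indicator A0 (x, E) \<partial>\<kappa>0)" .
    qed
    also have "\<dots> = (\<integral>\<^sup>+E. (\<integral>\<^sup>+x. indicator A0 (x, E) \<partial>G) \<partial>\<kappa>0)"
      using pair_sigma_finite.Fubini[OF psf0 Fm] by simp
    also have "\<dots> \<le> (\<integral>\<^sup>+E. ennreal r \<partial>\<kappa>0)"
    proof (rule nn_integral_mono)
      fix E assume E: "E \<in> space \<kappa>0"
      have eqs: "{x. \<bar>x - c E\<bar> \<le> r} = {c E - r .. c E + r}" by (auto simp: abs_le_iff)
      have "(\<integral>\<^sup>+x. indicator A0 (x, E) \<partial>G) = (\<integral>\<^sup>+x. indicator {x. \<bar>x - c E\<bar> \<le> r} x \<partial>G)"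
        using E by (intro nn_integral_cong) (auto simp: A0_def space_pair_measure k0 split: split_indicator)
      also have "\<dots> = emeasure G {x. \<bar>x - c E\<bar> \<le> r}"
        unfolding eqs by (rule nn_integral_indicator) simp
      also have "\<dots> \<le> ennreal r" by (rule gauss_bound[OF r])
      finally show "(\<integral>\<^sup>+x. indicator A0 (x, E) \<partial>G) \<le> ennreal r" .
    qed
    also have "\<dots> = ennreal r" using prob_space.emeasure_space_1[OF k0(3)] by simp
    finally show "(\<integral>\<^sup>+x. h (Y(b := x)) \<partial>G) \<le> ennreal r" .
  qed
  also have "\<dots> = ennreal r" using prob_space.emeasure_space_1[OF probR] by simp
  finally show ?thesis unfolding X_def[symmetric] by (simp add: \<open>emeasure (metaP L \<kappa>) X = _\<close>)
qed

lemma coc_null: "emeasure (metaP L \<kappa>) {z \<in> space (nu \<Otimes>\<^sub>M Espace L). \<not> Ecocycle L (snd z)} = 0"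
proof -
  let ?S = "space ((nu :: ('d edge \<Rightarrow> real) measure) \<Otimes>\<^sub>M (Espace L :: 'd evec measure))"
  let ?C = "{E \<in> space (Espace L :: 'd evec measure). Ecocycle L E}"
  have eq: "{z \<in> ?S. \<not> Ecocycle L (snd z)} = ?S - (snd -` ?C \<inter> ?S)"
    by (auto simp: space_pair_measure)
  have NCs: "{z \<in> ?S. \<not> Ecocycle L (snd z)} \<in> sets (nu \<Otimes>\<^sub>M Espace L)"
  proof -
    have "snd -` ?C \<inter> ?S \<in> sets (nu \<Otimes>\<^sub>M Espace L)"
      by (rule measurable_sets[OF measurable_snd coc_sets])
    hence "?S - (snd -` ?C \<inter> ?S) \<in> sets (nu \<Otimes>\<^sub>M Espace L)" by (rule sets.Diff[OF sets.top])
    thus ?thesis by (subst eq)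
  qed
  have "emeasure (metaP L \<kappa>) {z \<in> ?S. \<not> Ecocycle L (snd z)} =
     (\<integral>\<^sup>+J. emeasure (\<kappa> (restrict J (all_edges - LStar L))) {E\<in>space (Espace L). (J, E) \<in> {z \<in> ?S. \<not> Ecocycle L (snd z)}} \<partial>nu)"
    by (rule emeasure_metaP[OF NCs])
  also have "\<dots> = (\<integral>\<^sup>+J. 0 \<partial>(nu :: ('d edge \<Rightarrow> real) measure))"
  proof (rule nn_integral_cong)
    fix J :: "'d edge \<Rightarrow> real" assume J: "J \<in> space nu"
    let ?k = "\<kappa> (restrict J (all_edges - LStar L))"
    have jsp: "restrict J (all_edges - LStar L) \<in> space (\<Pi>\<^sub>M e\<in>all_edges - LStar L. (borel :: real measure))"
      using measurable_space[OF restr_meas J] .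
    have ae: "AE E in ?k. Ecocycle L E" using mk jsp unfolding metastate_kernel_def by blast
    have set: "{E\<in>space (Espace L). (J, E) \<in> {z \<in> ?S. \<not> Ecocycle L (snd z)}} = space (Espace L) - ?C"
      using J by (auto simp: space_pair_measure)
    have Ns: "space (Espace L) - ?C \<in> sets ?k" unfolding kappa_J(1)[OF J] using coc_sets by auto
    have "{x \<in> space ?k. \<not> Ecocycle L x} = space (Espace L) - ?C" unfolding kappa_J(2)[OF J] by auto
    from AE_iff_measurable[OF Ns this] ae
    show "emeasure ?k {E\<in>space (Espace L). (J, E) \<in> {z \<in> ?S. \<not> Ecocycle L (snd z)}} = 0"
      unfolding set by simp
  qed
  finally show ?thesis by simp
qed

end



definition bp :: "int \<Rightarrow> 'd::finite edge_cfg \<Rightarrow> 'd edge_cfg \<Rightarrow> 'd edge" where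
  "bp L \<eta> \<eta>' = (SOME b. b \<in> LStar L \<and> \<eta> b \<noteq> \<eta>' b)"

definition gcrit :: "int \<Rightarrow> 'd::finite edge_cfg \<Rightarrow> 'd edge_cfg \<Rightarrow> ('d edge \<Rightarrow> real) \<Rightarrow> 'd evec \<Rightarrow> real" where
  "gcrit L \<eta> \<eta>' J E = (E (\<eta>, \<eta>') - (\<Sum>e\<in>LStar L - {bp L \<eta> \<eta>'}. J e * (\<eta> e - \<eta>' e))) / (\<eta> (bp L \<eta> \<eta>') - \<eta>' (bp L \<eta> \<eta>'))"

lemma bp_prop:
  assumes "\<eta> \<in> SL L" "\<eta>' \<in> SL L" "\<eta> \<noteq> \<eta>'"
  shows "bp L \<eta> \<eta>' \<in> LStar L \<and> \<eta> (bp L \<eta> \<eta>') \<noteq> \<eta>' (bp L \<eta> \<eta>')"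
proof -
  obtain e where e: "\<eta> e \<noteq> \<eta>' e" using assms(3) by (auto simp: fun_eq_iff)
  have "e \<in> LStar L"
  proof (rule ccontr)
    assume "e \<notin> LStar L"
    thus False using e SL_val(2)[OF assms(1), of e] SL_val(2)[OF assms(2), of e] by simp
  qed
  hence "\<exists>b. b \<in> LStar L \<and> \<eta> b \<noteq> \<eta>' b" using e by blast
  thus ?thesis unfolding bp_def by (rule someI_ex)
qed

lemma crit_imp:
  assumes "\<eta> \<in> SL L" "\<eta>' \<in> SL L" "\<eta> \<noteq> \<eta>'"
    and eq: "(\<Sum>e\<in>LStar L. J e * (\<eta> e - \<eta>' e)) = E (\<eta>, \<eta>')"
  shows "J (bp L \<eta> \<eta>') = gcrit L \<eta> \<eta>' J E"
proof -
  let ?b = "bp L \<eta> \<eta>'"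
  have b: "?b \<in> LStar L" "\<eta> ?b - \<eta>' ?b \<noteq> 0" using bp_prop[OF assms(1-3)] by auto
  have "(\<Sum>e\<in>LStar L. J e * (\<eta> e - \<eta>' e)) = J ?b * (\<eta> ?b - \<eta>' ?b) + (\<Sum>e\<in>LStar L - {?b}. J e * (\<eta> e - \<eta>' e))"
    by (rule sum.remove[OF finite_LStar b(1)])
  thus ?thesis using eq b(2) unfolding gcrit_def by (simp add: field_simps)
qed

lemma gcrit_ind: "gcrit L \<eta> \<eta>' (J(bp L \<eta> \<eta>' := x)) E = gcrit L \<eta> \<eta>' J E"
  unfolding gcrit_def by (auto intro!: sum.cong arg_cong2[where f="(/)"])

lemma Wr_ind: "Wr L b (J(b := x)) E = Wr L b J E"
  unfolding Wr_def by (auto intro!: sum.cong simp: fun_eq_iff)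

lemma gb_ind: "gb L b (J(b := x)) E = gb L b J E"
  unfolding gb_def aa_def Wr_ind ..

lemma fst_comp: "e \<in> all_edges \<Longrightarrow> (\<lambda>z. fst z e) \<in> borel_measurable ((nu :: ('d::finite edge \<Rightarrow> real) measure) \<Otimes>\<^sub>M (Espace L :: 'd evec measure))"
  by (rule measurable_compose[OF measurable_fst comp_meas])

lemma snd_comp2: "p \<in> SL L \<times> SL L \<Longrightarrow> (\<lambda>z. snd z p) \<in> borel_measurable ((nu :: ('d::finite edge \<Rightarrow> real) measure) \<Otimes>\<^sub>M (Espace L :: 'd evec measure))"
  by (rule measurable_compose[OF measurable_snd snd_comp])

lemma Wr_meas: "\<eta> \<in> SL L \<Longrightarrow> (\<lambda>z. Wr L b (fst z) (snd z) \<eta>) \<in> borel_measurable ((nu :: ('d::finite edge \<Rightarrow> real) measure) \<Otimes>\<^sub>M (Espace L :: 'd evec measure))"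
  unfolding Wr_def
  by (intro borel_measurable_diff borel_measurable_uminus borel_measurable_sum borel_measurable_times fst_comp snd_comp2 borel_measurable_const)
     (use LStar_sub eta0_SL in auto)

lemma gb_meas: "(\<lambda>z. gb L b (fst z) (snd z)) \<in> borel_measurable ((nu :: ('d::finite edge \<Rightarrow> real) measure) \<Otimes>\<^sub>M (Espace L :: 'd evec measure))"
  unfolding gb_def aa_def
  by (intro borel_measurable_divide borel_measurable_diff borel_measurable_const borel_measurable_Min Wr_meas)
     (auto intro: finite_subset[OF _ finite_SL[of L]])

lemma gcrit_meas: "\<eta> \<in> SL L \<Longrightarrow> \<eta>' \<in> SL L \<Longrightarrow> (\<lambda>z. gcrit L \<eta> \<eta>' (fst z) (snd z)) \<in> borel_measurable ((nu :: ('d::finite edge \<Rightarrow> real) measure) \<Otimes>\<^sub>M (Espace L :: 'd evec measure))"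
  unfolding gcrit_def
  by (intro borel_measurable_divide borel_measurable_diff borel_measurable_sum borel_measurable_times fst_comp snd_comp2 borel_measurable_const)
     (use LStar_sub in auto)

lemma NC_sets: "{z \<in> space ((nu :: ('d::finite edge \<Rightarrow> real) measure) \<Otimes>\<^sub>M (Espace L :: 'd evec measure)). \<not> Ecocycle L (snd z)} \<in> sets (nu \<Otimes>\<^sub>M Espace L)"
proof -
  let ?S = "space ((nu :: ('d edge \<Rightarrow> real) measure) \<Otimes>\<^sub>M (Espace L :: 'd evec measure))"
  let ?C = "{E \<in> space (Espace L :: 'd evec measure). Ecocycle L E}"
  have eq: "{z \<in> ?S. \<not> Ecocycle L (snd z)} = ?S - (snd -` ?C \<inter> ?S)"
    by (auto simp: space_pair_measure)
  have "snd -` ?C \<inter> ?S \<in> sets (nu \<Otimes>\<^sub>M Espace L)"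
    by (rule measurable_sets[OF measurable_snd coc_sets])
  hence "?S - (snd -` ?C \<inter> ?S) \<in> sets (nu \<Otimes>\<^sub>M Espace L)" by (rule sets.Diff[OF sets.top])
  thus ?thesis by (subst eq)
qed



theorem lemma4p1:
  fixes \<epsilon> :: real
  assumes "\<epsilon> > 0"
  shows "\<exists>\<delta>>0. \<forall>(L::int) (\<kappa> :: ('d::finite edge \<Rightarrow> real) \<Rightarrow> 'd evec measure).
           L \<ge> 1 \<longrightarrow> metastate_kernel L \<kappa> \<longrightarrow>
           (\<exists>B\<in>sets (metaP L \<kappa>). measure (metaP L \<kappa>) B > 1 - \<epsilon> \<and>
              (\<forall>(J, E)\<in>B. real (card {b\<in>LStar L. \<bar>flexibility L E b J\<bar> > \<delta>})
                            > (1 - \<epsilon>) * real (card (LStar L :: 'd edge set))))"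
proof -
  have ep: "\<epsilon> > 0" by fact
  define \<delta> where "\<delta> = \<epsilon>^2"
  have dp: "\<delta> > 0" using ep by (simp add: \<delta>_def)
  show ?thesis
  proof (intro exI[of _ \<delta>] conjI allI impI)
    show "\<delta> > 0" by (rule dp)
    fix L :: int and \<kappa> :: "('d edge \<Rightarrow> real) \<Rightarrow> 'd evec measure"
    assume L: "L \<ge> 1" and mk: "metastate_kernel L \<kappa>"
    let ?M = "metaP L \<kappa>"
    let ?S = "space ((nu :: ('d edge \<Rightarrow> real) measure) \<Otimes>\<^sub>M (Espace L :: 'd evec measure))"
    interpret P: prob_space ?M by (rule prob_metaP[OF mk])
    have sp: "space ?M = ?S" by (rule space_metaP[OF mk])
    have se: "sets ?M = sets (nu \<Otimes>\<^sub>M Espace L)" by (rule sets_metaP[OF mk])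
    define N where "N = card (LStar L :: 'd edge set)"
    have finL: "finite (LStar L :: 'd edge set)" by (rule finite_LStar)
    have neL: "LStar L \<noteq> ({} :: 'd edge set)" by (rule LStar_nonempty[OF L])
    have Npos: "N > 0" unfolding N_def using finL neL by (simp add: card_gt_0_iff)
    define Bad where "Bad b = {z \<in> ?S. \<bar>fst z b - gb L b (fst z) (snd z)\<bar> \<le> \<delta> / 2}" for b
    have Bad_s: "Bad b \<in> sets ?M" if b: "b \<in> LStar L" for b
      unfolding se Bad_def
      by (intro borel_measurable_le borel_measurable_abs borel_measurable_diff fst_comp gb_meas borel_measurable_const)
         (use b LStar_sub in auto)
    have Bad_e: "emeasure ?M (Bad b) \<le> ennreal (\<delta> / 2)" if b: "b \<in> LStar L" for b
    proof -
      have ind: "\<And>J E x. (\<lambda>z. gb L b (fst z) (snd z)) (J(b:=x), E) = (\<lambda>z. gb L b (fst z) (snd z)) (J, E)"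
        by (simp add: gb_ind)
      have r: "\<delta> / 2 \<ge> 0" using dp by simp
      show ?thesis using key[OF mk b r gb_meas[of L b] ind] unfolding Bad_def by simp
    qed
    define NC where "NC = {z \<in> ?S. \<not> Ecocycle L (snd z)}"
    have NC_s: "NC \<in> sets ?M" unfolding se NC_def by (rule NC_sets)
    have NC_0: "measure ?M NC = 0" using coc_null[OF mk] unfolding NC_def by (simp add: measure_def)
    define Pairs where "Pairs = ({p \<in> SL L \<times> SL L. fst p \<noteq> snd p} :: ('d edge_cfg \<times> 'd edge_cfg) set)"
    define Cr where "Cr p = {z \<in> ?S. \<bar>fst z (bp L (fst p) (snd p)) - gcrit L (fst p) (snd p) (fst z) (snd z)\<bar> \<le> 0}" for p
    have Cr_null: "Cr p \<in> null_sets ?M" if p: "p \<in> Pairs" for p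
    proof -
      have pp: "fst p \<in> SL L" "snd p \<in> SL L" "fst p \<noteq> snd p" using p by (auto simp: Pairs_def)
      have bb: "bp L (fst p) (snd p) \<in> LStar L" using bp_prop[OF pp] by auto
      have s: "Cr p \<in> sets ?M" unfolding se Cr_def
        by (intro borel_measurable_le borel_measurable_abs borel_measurable_diff fst_comp gcrit_meas pp borel_measurable_const)
           (use bb LStar_sub in auto)
      have ind: "\<And>J E x. (\<lambda>z. gcrit L (fst p) (snd p) (fst z) (snd z)) (J(bp L (fst p) (snd p):=x), E) = (\<lambda>z. gcrit L (fst p) (snd p) (fst z) (snd z)) (J, E)"
        by (simp add: gcrit_ind)
      have "emeasure ?M (Cr p) \<le> ennreal 0"
        using key[OF mk bb order_refl gcrit_meas[OF pp(1,2)] ind] unfolding Cr_def by simp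
      hence "emeasure ?M (Cr p) = 0" by simp
      thus ?thesis using s by auto
    qed
    define CR where "CR = (\<Union>p\<in>Pairs. Cr p)"
    have finP: "finite Pairs" unfolding Pairs_def using finite_SL[of L]
      by (intro finite_subset[OF _ finite_cartesian_product[OF finite_SL finite_SL]]) auto
    have CR_null: "CR \<in> null_sets ?M" unfolding CR_def
      by (rule null_sets_UN'[OF countable_finite[OF finP]]) (rule Cr_null)
    have CR_s: "CR \<in> sets ?M" using CR_null by auto
    have CR_0: "measure ?M CR = 0" using CR_null by (rule measure_eq_0_null_sets)
    define cnt where "cnt z = (\<Sum>b\<in>LStar L. indicator (Bad b) z :: real)" for z
    have cnt_m: "cnt \<in> borel_measurable ?M" unfolding cnt_def
      by (intro borel_measurable_sum borel_measurable_indicator Bad_s)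
    define BIG where "BIG = {z \<in> ?S. \<epsilon> * real N \<le> cnt z}"
    have BIG_s: "BIG \<in> sets ?M"
    proof -
      have "{z \<in> space ?M. \<epsilon> * real N \<le> cnt z} \<in> sets ?M"
        by (intro borel_measurable_le borel_measurable_const cnt_m)
      thus ?thesis unfolding BIG_def sp .
    qed
    have markov: "ennreal (\<epsilon> * real N) * emeasure ?M BIG \<le> of_nat N * ennreal (\<delta> / 2)"
    proof -
      have "ennreal (\<epsilon> * real N) * emeasure ?M BIG = (\<integral>\<^sup>+z. ennreal (\<epsilon> * real N) * indicator BIG z \<partial>?M)"
        by (rule nn_integral_cmult_indicator[OF BIG_s, symmetric])
      also have "\<dots> \<le> (\<integral>\<^sup>+z. (\<Sum>b\<in>LStar L. indicator (Bad b) z) \<partial>?M)"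
      proof (rule nn_integral_mono)
        fix z assume z: "z \<in> space ?M"
        show "ennreal (\<epsilon> * real N) * indicator BIG z \<le> (\<Sum>b\<in>LStar L. indicator (Bad b) z)"
        proof (cases "z \<in> BIG")
          case True
          hence "ennreal (\<epsilon> * real N) \<le> ennreal (cnt z)" unfolding BIG_def by (auto intro: ennreal_leI)
          also have "ennreal (cnt z) = (\<Sum>b\<in>LStar L. ennreal (indicator (Bad b) z))"
            unfolding cnt_def by (rule sum_ennreal[symmetric]) auto
          also have "\<dots> = (\<Sum>b\<in>LStar L. indicator (Bad b) z)" by (simp add: ennreal_indicator)
          finally show ?thesis using True by simp
        qed simp
      qed
      also have "\<dots> = (\<Sum>b\<in>LStar L. emeasure ?M (Bad b))"
        by (subst nn_integral_sum) (auto intro!: sum.cong nn_integral_indicator Bad_s borel_measurable_indicator)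
      also have "\<dots> \<le> (\<Sum>b\<in>(LStar L :: 'd edge set). ennreal (\<delta> / 2))"
        by (intro sum_mono Bad_e)
      also have "\<dots> = of_nat N * ennreal (\<delta> / 2)" unfolding N_def by simp
      finally show ?thesis .
    qed
    have BIG_le: "measure ?M BIG \<le> \<epsilon> / 2"
    proof -
      have "ennreal (\<epsilon> * real N * measure ?M BIG) = ennreal (\<epsilon> * real N) * emeasure ?M BIG"
        using ep by (simp add: P.emeasure_eq_measure ennreal_mult)
      also have "\<dots> \<le> of_nat N * ennreal (\<delta> / 2)" by (rule markov)
      also have "\<dots> = ennreal (real N) * ennreal (\<delta> / 2)" by (simp add: ennreal_of_nat_eq_real_of_nat)
      also have "\<dots> = ennreal (real N * (\<delta> / 2))" using dp by (intro ennreal_mult[symmetric]) auto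
      finally have "\<epsilon> * real N * measure ?M BIG \<le> real N * (\<delta> / 2)" using dp by simp
      hence "(\<epsilon> * real N) * measure ?M BIG \<le> (\<epsilon> * real N) * (\<epsilon> / 2)"
        unfolding \<delta>_def by (simp add: power2_eq_square algebra_simps)
      moreover have "\<epsilon> * real N > 0" using ep Npos by simp
      ultimately show ?thesis by (rule mult_left_le_imp_le)
    qed
    define B where "B = ?S - (NC \<union> CR \<union> BIG)"
    have U_s: "NC \<union> CR \<union> BIG \<in> sets ?M" using NC_s CR_s BIG_s by auto
    have B_s: "B \<in> sets ?M" unfolding B_def sp[symmetric] using U_s by auto
    have "measure ?M (NC \<union> CR \<union> BIG) \<le> measure ?M (NC \<union> CR) + measure ?M BIG"
      by (rule measure_Un_le) (use NC_s CR_s BIG_s in auto)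
    also have "measure ?M (NC \<union> CR) \<le> measure ?M NC + measure ?M CR"
      by (rule measure_Un_le) (use NC_s CR_s in auto)
    finally have "measure ?M (NC \<union> CR \<union> BIG) \<le> \<epsilon> / 2" using NC_0 CR_0 BIG_le by simp
    moreover have "measure ?M B = 1 - measure ?M (NC \<union> CR \<union> BIG)"
      unfolding B_def sp[symmetric] by (rule P.prob_compl[OF U_s])
    ultimately have meas: "measure ?M B > 1 - \<epsilon>" using ep by simp
    have pw: "real (card {b\<in>LStar L. \<bar>flexibility L E b J\<bar> > \<delta>}) > (1 - \<epsilon>) * real (card (LStar L :: 'd edge set))"
      if JE: "(J, E) \<in> B" for J E
    proof -
      have inS: "(J, E) \<in> ?S" and nNC: "(J, E) \<notin> NC" and nCR: "(J, E) \<notin> CR" and nBIG: "(J, E) \<notin> BIG"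
        using JE unfolding B_def by auto
      have coc: "Ecocycle L E" using inS nNC unfolding NC_def by auto
      have nc: "\<forall>\<eta>\<in>SL L. \<forall>\<eta>'\<in>SL L. \<eta> \<noteq> \<eta>' \<longrightarrow> (\<Sum>e\<in>LStar L. J e * (\<eta> e - \<eta>' e)) \<noteq> E (\<eta>, \<eta>')"
      proof (intro ballI impI notI)
        fix \<eta> \<eta>' assume h: "\<eta> \<in> SL L" "\<eta>' \<in> SL L" "\<eta> \<noteq> \<eta>'" "(\<Sum>e\<in>LStar L. J e * (\<eta> e - \<eta>' e)) = E (\<eta>, \<eta>')"
        have "J (bp L \<eta> \<eta>') = gcrit L \<eta> \<eta>' J E" by (rule crit_imp[of \<eta> L \<eta>' J E, OF h])
        hence "(J, E) \<in> Cr (\<eta>, \<eta>')" using inS unfolding Cr_def by simp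
        moreover have "(\<eta>, \<eta>') \<in> Pairs" using h unfolding Pairs_def by simp
        ultimately show False using nCR unfolding CR_def by blast
      qed
      define BS where "BS = {b\<in>LStar L. (J, E) \<in> Bad b}"
      have cntc: "cnt (J, E) = real (card BS)"
      proof -
        have "cnt (J, E) = (\<Sum>b\<in>LStar L. if (J, E) \<in> Bad b then 1 else 0)"
          unfolding cnt_def by (intro sum.cong) (auto simp: indicator_def)
        also have "\<dots> = (\<Sum>b\<in>BS. 1)" unfolding BS_def by (rule sum.inter_filter[OF finL, symmetric])
        also have "\<dots> = real (card BS)" by simp
        finally show ?thesis .
      qed
      have small: "real (card BS) < \<epsilon> * real N" using nBIG inS cntc unfolding BIG_def by auto
      have sub: "LStar L - BS \<subseteq> {b\<in>LStar L. \<bar>flexibility L E b J\<bar> > \<delta>}"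
      proof
        fix b assume b: "b \<in> LStar L - BS"
        hence "\<bar>J b - gb L b J E\<bar> > \<delta> / 2" using inS unfolding BS_def Bad_def by auto
        thus "b \<in> {b\<in>LStar L. \<bar>flexibility L E b J\<bar> > \<delta>}" using det_flex[OF coc nc _ ] b by auto
      qed
      have BSsub: "BS \<subseteq> LStar L" unfolding BS_def by auto
      have "real (card (LStar L - BS)) \<le> real (card {b\<in>LStar L. \<bar>flexibility L E b J\<bar> > \<delta>})"
        using card_mono[OF _ sub] finL by simp
      moreover have "card (LStar L - BS) = N - card BS" unfolding N_def
        by (rule card_Diff_subset[OF finite_subset[OF BSsub finL] BSsub])
      moreover have "card BS \<le> N" unfolding N_def by (rule card_mono[OF finL BSsub])
      ultimately have "real N - real (card BS) \<le> real (card {b\<in>LStar L. \<bar>flexibility L E b J\<bar> > \<delta>})"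
        by (simp add: of_nat_diff)
      thus ?thesis using small unfolding N_def by (simp add: algebra_simps)
    qed
    show "\<exists>B\<in>sets ?M. measure ?M B > 1 - \<epsilon> \<and>
              (\<forall>(J, E)\<in>B. real (card {b\<in>LStar L. \<bar>flexibility L E b J\<bar> > \<delta>})
                            > (1 - \<epsilon>) * real (card (LStar L :: 'd edge set)))"
      using B_s meas pw by blast
  qed
qed


end
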